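(* Let $I\subseteq R$ be an $\mathfrak m$-primary monomial ideal with $\mu_i=x_i^{d_i}\in G(I)$ for $i=1,\dots,n$. Assume that every minimal generator $x_1^{\alpha_1}\cdots x_n^{\alpha_n}\in G(I)$ which is not a corner satisfies $\frac{\alpha_1}{d_1}+\cdots+\frac{\alpha_n}{d_n}\ge \frac n2$. Then $I$ is good.
   Context: Let $\mathbb K$ be a field, $R=\mathbb K[x_1,\dots,x_n]$, $\mathfrak m=\langle x_1,\dots,x_n\rangle$, $\mathbb N=\{0,1,2,\dots\}$. A monomial $x_1^{\alpha_1}\cdots x_n^{\alpha_n}$ is identified with the point $(\alpha_1,\dots,\alpha_n)\in\mathbb N^n$. For a monomial ideal $I$, $G(I)$ denotes its (unique) minimal monomial generating set. If $I$ is an $\mathfrak m$-primary monomial ideal, then for each $i$ there is a unique $d_i\ge1$ with $x_i^{d_i}\in G(I)$; write $\mu_i=x_i^{d_i}$. A corner is a monomial whose exponent vector is $(k_1d_1,\dots,k_nd_n)$ with all $k_i\in\mathbb N$. For $(a_1,\dots,a_n)\in\mathbb N^n$ the box associated to $I$ is $B_{a_1,\dots,a_n}=([a_1d_1,(a_1+1)d_1]\times\cdots\times[a_nd_n,(a_n+1)d_n])\cap\mathbb N^n$; a monomial belongs to a box if its exponent vector does. $I$ is called good if for every integer $l\ge1$, every element of $G(I^l)$ belongs to some box $B_{a_1,\dots,a_n}$ with $a_1+\dots+a_n=l-1$; otherwise $I$ is called bad. *)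

theory Defs
  imports Complex_Main
begin

text \<open>Monomials of R = K[x_1,...,x_n] are identified with exponent vectors in N^n,
  represented as functions nat => nat vanishing outside {0..<n} (index i < n stands for x_(i+1)).
  A monomial ideal is identified with the set of exponent vectors of the monomials it contains
  (an upward closed subset of N^n); this is independent of the field K.\<close>

definition expvecs :: "nat \<Rightarrow> (nat \<Rightarrow> nat) set" where
  "expvecs n = {a. \<forall>i. n \<le> i \<longrightarrow> a i = 0}"

definition monomial_ideal :: "nat \<Rightarrow> (nat \<Rightarrow> nat) set \<Rightarrow> bool" where
  "monomial_ideal n I \<longleftrightarrow> I \<subseteq> expvecs n \<and>
     (\<forall>a\<in>I. \<forall>b\<in>expvecs n. a \<le> b \<longrightarrow> b \<in> I)"

definition pure_pow :: "nat \<Rightarrow> nat \<Rightarrow> (nat \<Rightarrow> nat)" where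
  "pure_pow i k = (\<lambda>j. if j = i then k else 0)"

definition m_primary :: "nat \<Rightarrow> (nat \<Rightarrow> nat) set \<Rightarrow> bool" where
  "m_primary n I \<longleftrightarrow> monomial_ideal n I \<and> (\<lambda>_. 0) \<notin> I \<and>
     (\<forall>i<n. \<exists>k. pure_pow i k \<in> I)"

definition mingens :: "(nat \<Rightarrow> nat) set \<Rightarrow> (nat \<Rightarrow> nat) set" where
  "mingens I = {a \<in> I. \<forall>b\<in>I. b \<le> a \<longrightarrow> b = a}"

fun ideal_pow :: "nat \<Rightarrow> (nat \<Rightarrow> nat) set \<Rightarrow> nat \<Rightarrow> (nat \<Rightarrow> nat) set" where
  "ideal_pow n I 0 = expvecs n"
| "ideal_pow n I (Suc l) = {(\<lambda>j. a j + b j) | a b. a \<in> I \<and> b \<in> ideal_pow n I l}"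

definition dexp :: "(nat \<Rightarrow> nat) set \<Rightarrow> nat \<Rightarrow> nat" where
  "dexp I i = (LEAST k. pure_pow i k \<in> I)"

definition is_corner :: "nat \<Rightarrow> (nat \<Rightarrow> nat) set \<Rightarrow> (nat \<Rightarrow> nat) \<Rightarrow> bool" where
  "is_corner n I a \<longleftrightarrow> (\<exists>k::nat \<Rightarrow> nat. \<forall>i<n. a i = k i * dexp I i)"

definition box :: "nat \<Rightarrow> (nat \<Rightarrow> nat) set \<Rightarrow> (nat \<Rightarrow> nat) \<Rightarrow> (nat \<Rightarrow> nat) set" where
  "box n I a = {b \<in> expvecs n. \<forall>i<n. a i * dexp I i \<le> b i \<and> b i \<le> (a i + 1) * dexp I i}"

definition good :: "nat \<Rightarrow> (nat \<Rightarrow> nat) set \<Rightarrow> bool" where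
  "good n I \<longleftrightarrow> (\<forall>l\<ge>1. \<forall>g\<in>mingens (ideal_pow n I l).
     \<exists>a\<in>expvecs n. (\<Sum>i<n. a i) = l - 1 \<and> g \<in> box n I a)"

end

theory Submission
  imports Defs
begin

definition FF :: "nat \<Rightarrow> (nat \<Rightarrow> nat) set \<Rightarrow> (nat \<Rightarrow> nat) \<Rightarrow> nat" where
  "FF n I g = (\<Sum>i<n. g i div dexp I i)"

definition QQ :: "nat \<Rightarrow> (nat \<Rightarrow> nat) set \<Rightarrow> (nat \<Rightarrow> nat) \<Rightarrow> real" where
  "QQ n I g = (\<Sum>i<n. real (g i) / real (dexp I i))"

lemma sum_choose:
  fixes lo hi :: "nat \<Rightarrow> nat"
  assumes "\<forall>i<n. lo i \<le> hi i" "(\<Sum>i<n. lo i) \<le> t" "t \<le> (\<Sum>i<n. hi i)"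
  shows "\<exists>a. (\<forall>i\<ge>n. a i = 0) \<and> (\<forall>i<n. lo i \<le> a i \<and> a i \<le> hi i) \<and> (\<Sum>i<n. a i) = t"
  using assms
proof (induction n arbitrary: t)
  case 0
  then show ?case by (intro exI[of _ "\<lambda>_. 0"]) auto
next
  case (Suc n)
  define H where "H = (\<Sum>i<n. hi i)"
  define L where "L = (\<Sum>i<n. lo i)"
  define x where "x = max (lo n) (t - H)"
  have x1: "lo n \<le> x" "x \<le> hi n" "x \<le> t" using Suc.prems unfolding x_def H_def by auto
  have LH: "L \<le> H" unfolding L_def H_def using Suc.prems by (intro sum_mono) auto
  have t': "L \<le> t - x" "t - x \<le> H" using Suc.prems LH unfolding x_def H_def L_def max_def
    by (auto split: if_splits)
  obtain a where a: "\<forall>i\<ge>n. a i = 0" "\<forall>i<n. lo i \<le> a i \<and> a i \<le> hi i" "(\<Sum>i<n. a i) = t - x"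
    using Suc.IH[of "t - x"] Suc.prems t' unfolding H_def L_def by auto
  have "(\<Sum>i<n. (a(n := x)) i) = (\<Sum>i<n. a i)" by (intro sum.cong) auto
  then have "(\<Sum>i<Suc n. (a(n := x)) i) = t" using a(3) x1 by simp
  moreover have "\<forall>i\<ge>Suc n. (a(n := x)) i = 0" using a(1) by auto
  moreover have "\<forall>i<Suc n. lo i \<le> (a(n := x)) i \<and> (a(n := x)) i \<le> hi i"
    using a(2) x1 by (auto simp: less_Suc_eq)
  ultimately show ?case by blast
qed

lemma d_facts:
  assumes mp: "m_primary n I" and i: "i < n"
  shows "dexp I i > 0 \<and> pure_pow i (dexp I i) \<in> I"
proof -
  obtain k where "pure_pow i k \<in> I" using mp i unfolding m_primary_def by blast
  then have p: "pure_pow i (dexp I i) \<in> I" unfolding dexp_def by (rule LeastI)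
  have "dexp I i \<noteq> 0"
  proof
    assume "dexp I i = 0"
    then have "pure_pow i (dexp I i) = (\<lambda>_. 0)" unfolding pure_pow_def by auto
    then show False using p mp unfolding m_primary_def by auto
  qed
  then show ?thesis using p by auto
qed

lemma pow_sub:
  assumes mp: "m_primary n I"
  shows "ideal_pow n I l \<subseteq> expvecs n"
proof (induction l)
  case 0
  then show ?case by simp
next
  case (Suc l)
  have "I \<subseteq> expvecs n" using mp unfolding m_primary_def monomial_ideal_def by auto
  then show ?case using Suc unfolding expvecs_def by auto
qed

lemma mingen_below:
  assumes mp: "m_primary n I" and aI: "a \<in> I"
  shows "\<exists>f\<in>mingens I. f \<le> a"
proof -
  have "\<exists>x. (x \<in> I \<and> x \<le> a) \<and> (\<forall>y. (y \<in> I \<and> y \<le> a) \<longrightarrow> (\<Sum>i<n. x i) \<le> (\<Sum>i<n. y i))"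
    using ex_has_least_nat[of "\<lambda>x. x \<in> I \<and> x \<le> a" a "\<lambda>x. \<Sum>i<n. x i"] aI by auto
  then obtain f where f: "f \<in> I" "f \<le> a"
    and fmin: "\<forall>y. y \<in> I \<and> y \<le> a \<longrightarrow> (\<Sum>i<n. f i) \<le> (\<Sum>i<n. y i)" by blast
  have sub: "I \<subseteq> expvecs n" using mp unfolding m_primary_def monomial_ideal_def by auto
  have "f \<in> mingens I"
    unfolding mingens_def
  proof (safe intro!: f(1))
    fix b assume bI: "b \<in> I" and bf: "b \<le> f"
    have "(\<Sum>i<n. f i) \<le> (\<Sum>i<n. b i)" using fmin bI bf f(2) order_trans by blast
    moreover have bfi: "\<forall>i<n. b i \<le> f i" using bf by (simp add: le_fun_def)
    moreover have "(\<Sum>i<n. b i) \<le> (\<Sum>i<n. f i)" using bfi by (intro sum_mono) auto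
    ultimately have "(\<Sum>i<n. b i) = (\<Sum>i<n. f i)" by linarith
    then have eq: "\<forall>i<n. b i = f i" using sum_mono_inv[of b "{..<n}" f] bfi by auto
    show "b = f"
    proof
      fix i show "b i = f i"
      proof (cases "i < n")
        case True then show ?thesis using eq by auto
      next
        case False
        have "b \<in> expvecs n" "f \<in> expvecs n" using sub bI f(1) by auto
        then show ?thesis using False unfolding expvecs_def by (auto simp: not_less)
      qed
    qed
  qed
  then show ?thesis using f by blast
qed

lemma corner_facts:
  assumes mp: "m_primary n I" and fI: "f \<in> I" and c: "is_corner n I f"
  shows "FF n I f \<ge> 1 \<and> QQ n I f = real (FF n I f)"
proof -
  obtain k where k: "\<forall>i<n. f i = k i * dexp I i" using c unfolding is_corner_def by blast
  have dpos: "\<forall>i<n. dexp I i > 0" using d_facts[OF mp] by blast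
  have F: "FF n I f = (\<Sum>i<n. k i)" unfolding FF_def using k dpos by (intro sum.cong) auto
  have Q: "QQ n I f = (\<Sum>i<n. real (k i))" unfolding QQ_def using k dpos by (intro sum.cong) auto
  have "(\<Sum>i<n. k i) \<noteq> 0"
  proof
    assume "(\<Sum>i<n. k i) = 0"
    then have k0: "\<forall>i<n. k i = 0" by simp
    have "f = (\<lambda>_. 0)"
    proof
      fix i show "f i = 0"
      proof (cases "i < n")
        case True then show ?thesis using k k0 by auto
      next
        case False then show ?thesis using fI mp
          unfolding m_primary_def monomial_ideal_def expvecs_def by auto
      qed
    qed
    then show False using fI mp unfolding m_primary_def by auto
  qed
  then have s1: "1 \<le> (\<Sum>i<n. k i)" by linarith
  have s2: "1 \<le> FF n I f" using F s1 by presburger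
  have "QQ n I f = real (FF n I f)" using F Q by (simp add: of_nat_sum)
  then show ?thesis using s2 by blast
qed

lemma noncorner_n:
  assumes mp: "m_primary n I" and f: "f \<in> mingens I" and nc: "\<not> is_corner n I f"
  shows "n \<ge> 2"
proof (rule ccontr)
  assume "\<not> n \<ge> 2"
  moreover have "n \<noteq> 0" using nc unfolding is_corner_def by auto
  ultimately have n1: "n = 1" by auto
  have fI: "f \<in> I" using f mingens_def by auto
  have fe: "\<forall>i\<ge>1. f i = 0" using fI mp n1
    unfolding m_primary_def monomial_ideal_def expvecs_def by auto
  have "f = pure_pow 0 (f 0)"
  proof
    fix j show "f j = pure_pow 0 (f 0) j" using fe unfolding pure_pow_def by (cases j) auto
  qed
  hence "pure_pow 0 (f 0) \<in> I" using fI by simp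
  hence le: "dexp I 0 \<le> f 0" unfolding dexp_def by (rule Least_le)
  have pI: "pure_pow 0 (dexp I 0) \<in> I" using d_facts[OF mp] n1 by auto
  have "pure_pow 0 (dexp I 0) \<le> f" using le fe unfolding pure_pow_def le_fun_def by auto
  hence "pure_pow 0 (dexp I 0) = f" using f pI unfolding mingens_def by auto
  hence "f 0 = 1 * dexp I 0" unfolding pure_pow_def by auto
  hence "is_corner n I f" unfolding is_corner_def using n1 by (intro exI[of _ "\<lambda>_. 1"]) auto
  with nc show False by blast
qed

lemma div_super: "(a::nat) div d + b div d \<le> (a + b) div d"
  by (metis div_add1_eq le_add1)
lemma ceil_facts:
  fixes g d :: nat
  assumes d: "0 < d"
  shows "g \<le> ((g + d - 1) div d) * d"
    and "1 \<le> (g + d - 1) div d - 1 \<Longrightarrow> ((g + d - 1) div d - 1) * d < g"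
    and "(g + d - 1) div d - 1 \<le> g div d"
proof -
  define C where "C = (g + d - 1) div d"
  define r where "r = (g + d - 1) mod d"
  have e: "C * d + r = g + d - 1" unfolding C_def r_def by simp
  have r: "r < d" unfolding r_def using d by simp
  show "g \<le> ((g + d - 1) div d) * d" using e r d unfolding C_def[symmetric] by linarith
  have m: "(C - 1) * d = C * d - d" by (simp add: diff_mult_distrib)
  have le: "(C - 1) * d \<le> g" using m e d by linarith
  show "(g + d - 1) div d - 1 \<le> g div d" using le d unfolding C_def[symmetric]
    by (simp add: less_eq_div_iff_mult_less_eq)
  assume c: "1 \<le> (g + d - 1) div d - 1"
  then have "2 * d \<le> C * d" unfolding C_def[symmetric] by (intro mult_le_mono1) linarith
  then show "((g + d - 1) div d - 1) * d < g" using m e d unfolding C_def[symmetric] by linarith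
qed


lemma invariant:
  assumes mp: "m_primary n I"
    and hyp: "\<forall>g\<in>mingens I. \<not> is_corner n I g \<longrightarrow>
           (\<Sum>i<n. real (g i) / real (dexp I i)) \<ge> real n / 2"
  shows "g \<in> ideal_pow n I l \<Longrightarrow> \<exists>g'\<in>ideal_pow n I l. g' \<le> g \<and> (\<exists>s m. s + m = l \<and> s \<le> FF n I g'
     \<and> real s + real m * real n / 2 \<le> QQ n I g' \<and> (m \<ge> 1 \<longrightarrow> n \<ge> 2))"
proof (induction l arbitrary: g)
  case 0
  have "(\<lambda>_. 0) \<in> ideal_pow n I 0" by (simp add: expvecs_def)
  moreover have "(\<lambda>_. 0) \<le> g" by (simp add: le_fun_def)
  moreover have "QQ n I (\<lambda>_. 0) = 0" by (simp add: QQ_def)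
  ultimately show ?case by (intro bexI[of _ "\<lambda>_. 0"] conjI exI[of _ 0]) auto
next
  case (Suc l)
  then obtain a b where g: "g = (\<lambda>j. a j + b j)" "a \<in> I" "b \<in> ideal_pow n I l" by auto
  obtain f where f: "f \<in> mingens I" "f \<le> a" using mingen_below[OF mp g(2)] by blast
  obtain b' s m where b': "b' \<in> ideal_pow n I l" "b' \<le> b" "s + m = l" "s \<le> FF n I b'"
    "real s + real m * real n / 2 \<le> QQ n I b'" "m \<ge> 1 \<longrightarrow> n \<ge> 2"
    using Suc.IH[OF g(3)] by blast
  define g' where "g' = (\<lambda>j. f j + b' j)"
  have fI: "f \<in> I" using f(1) unfolding mingens_def by auto
  have g'in: "g' \<in> ideal_pow n I (Suc l)" using fI b'(1) unfolding g'_def by auto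
  have g'le: "g' \<le> g" using f(2) b'(2) unfolding g'_def g(1) le_fun_def by (simp add: add_mono)
  have Qadd: "QQ n I g' = QQ n I f + QQ n I b'"
    unfolding QQ_def g'_def by (simp add: add_divide_distrib sum.distrib)
  have Fadd: "FF n I g' \<ge> FF n I f + FF n I b'"
    unfolding FF_def g'_def sum.distrib[symmetric] by (intro sum_mono) (rule div_super)
  show ?case
  proof (cases "is_corner n I f")
    case True
    have c: "FF n I f \<ge> 1" "QQ n I f = real (FF n I f)" using corner_facts[OF mp fI True] by auto
    have "Suc s + m = Suc l" using b' by simp
    moreover have "Suc s \<le> FF n I g'" using c Fadd b' by linarith
    moreover have "real (Suc s) + real m * real n / 2 \<le> QQ n I g'"
    proof -
      have "real (FF n I f) \<ge> 1" using c by simp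
      then show ?thesis using Qadd c b'(5) by simp
    qed
    ultimately show ?thesis using g'in g'le b'(6) by blast
  next
    case False
    have q: "QQ n I f \<ge> real n / 2" using hyp f(1) False unfolding QQ_def by blast
    have n2: "n \<ge> 2" using noncorner_n[OF mp f(1) False] .
    have "s + Suc m = Suc l" using b' by simp
    moreover have "s \<le> FF n I g'" using Fadd b' by linarith
    moreover have "real s + real (Suc m) * real n / 2 \<le> QQ n I g'"
    proof -
      have "real (Suc m) * real n / 2 = real n / 2 + real m * real n / 2"
        by (simp add: algebra_simps add_divide_distrib)
      then show ?thesis using Qadd q b'(5) by linarith
    qed
    ultimately show ?thesis using g'in g'le n2 by blast
  qed
qed

lemma vec_in_pow:
  assumes mp: "m_primary n I"
  shows "(\<Sum>i<n. c i) = l \<Longrightarrow> (\<lambda>i. if i < n then c i * dexp I i else 0) \<in> ideal_pow n I l"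
proof (induction l arbitrary: c)
  case 0
  then show ?case by (auto simp: expvecs_def)
next
  case (Suc l)
  obtain j where j: "j < n" "c j > 0"
  proof -
    have "\<not> (\<forall>i<n. c i = 0)"
    proof
      assume "\<forall>i<n. c i = 0"
      then have "(\<Sum>i<n. c i) = 0" by simp
      then show False using Suc.prems by simp
    qed
    then show ?thesis using that by auto
  qed
  obtain k where k: "c j = Suc k" using j(2) gr0_implies_Suc by blast
  define c' where "c' = c(j := k)"
  have "(\<Sum>i<n. c i) = c j + (\<Sum>i\<in>{..<n}-{j}. c i)" using j by (simp add: sum.remove)
  moreover have "(\<Sum>i<n. c' i) = c' j + (\<Sum>i\<in>{..<n}-{j}. c' i)" using j by (simp add: sum.remove)
  moreover have "(\<Sum>i\<in>{..<n}-{j}. c' i) = (\<Sum>i\<in>{..<n}-{j}. c i)" unfolding c'_def by (intro sum.cong) auto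
  ultimately have "(\<Sum>i<n. c' i) = l" using Suc.prems k unfolding c'_def by simp
  then have IH: "(\<lambda>i. if i < n then c' i * dexp I i else 0) \<in> ideal_pow n I l" by (rule Suc.IH)
  have pj: "pure_pow j (dexp I j) \<in> I" using d_facts[OF mp j(1)] by blast
  have eq: "(\<lambda>i. if i < n then c i * dexp I i else 0) =
      (\<lambda>i. pure_pow j (dexp I j) i + (if i < n then c' i * dexp I i else 0))"
  proof
    fix i show "(if i < n then c i * dexp I i else 0) =
      pure_pow j (dexp I j) i + (if i < n then c' i * dexp I i else 0)"
      using j k unfolding c'_def pure_pow_def by (cases "i = j") auto
  qed
  show ?case unfolding eq using pj IH by auto
qed

theorem mainTheorem3:
  fixes n :: nat and I :: "(nat \<Rightarrow> nat) set"
  assumes "m_primary n I"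
    and "\<forall>g\<in>mingens I. \<not> is_corner n I g \<longrightarrow>
           (\<Sum>i<n. real (g i) / real (dexp I i)) \<ge> real n / 2"
  shows "good n I"
proof -
  have mp: "m_primary n I" using assms(1) .
  show ?thesis unfolding good_def
  proof (intro allI impI ballI)
    fix l g assume l1: "1 \<le> l" and gm: "g \<in> mingens (ideal_pow n I l)"
    have gI: "g \<in> ideal_pow n I l" and gmin: "\<forall>b\<in>ideal_pow n I l. b \<le> g \<longrightarrow> b = g"
      using gm unfolding mingens_def by auto
    have dpos: "\<forall>i<n. dexp I i > 0" using d_facts[OF mp] by blast
    define hi where "hi i = g i div dexp I i" for i
    define lo where "lo i = (g i + dexp I i - 1) div dexp I i - 1" for i
    have lohi: "\<forall>i<n. lo i \<le> hi i" using dpos ceil_facts(3) unfolding lo_def hi_def by blast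
    obtain g' s m where g': "g' \<in> ideal_pow n I l" "g' \<le> g" "s + m = l" "s \<le> FF n I g'"
       "real s + real m * real n / 2 \<le> QQ n I g'" "m \<ge> 1 \<longrightarrow> n \<ge> 2"
      using invariant[OF mp assms(2) gI] by blast
    have gg: "g' = g" using gmin g' by blast
    have FFg: "FF n I g = (\<Sum>i<n. hi i)" unfolding FF_def hi_def by simp
    have U: "l - 1 \<le> (\<Sum>i<n. hi i)"
    proof (cases "m \<le> 1")
      case True
      have "s \<le> FF n I g" using g'(4) gg by simp
      then show ?thesis using True g'(3) FFg by linarith
    next
      case False
      then have n2: "n \<ge> 2" "m \<ge> 2" using g' by auto
      have per: "\<forall>i<n. real (g i) / real (dexp I i) - 1 < real (hi i)" using dpos unfolding hi_def
         by (metis floor_divide_of_nat_eq of_int_of_nat_eq real_of_int_floor_gt_diff_one)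
      have "(\<Sum>i<n. (real (g i) / real (dexp I i) - 1)) < (\<Sum>i<n. real (hi i))"
        using n2 per by (intro sum_strict_mono) (auto simp: lessThan_empty_iff)
      then have A: "QQ n I g - real n < real (\<Sum>i<n. hi i)" unfolding QQ_def by (simp add: sum_subtractf)
      have B: "real m * real n / 2 - real n \<ge> real m - 2"
      proof -
        have "0 \<le> (real m - 2) * (real n - 2)" using n2 by simp
        then show ?thesis by (simp add: algebra_simps)
      qed
      have "real (s + m) < real ((\<Sum>i<n. hi i) + 2)" using A B g'(5) gg by simp
      then have "s + m < (\<Sum>i<n. hi i) + 2" by (simp only: of_nat_less_iff)
      then show ?thesis using g' by linarith
    qed
    have lod: "\<forall>i<n. lo i * dexp I i \<le> g i"
    proof (intro allI impI)
      fix i assume i: "i < n"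
      have "lo i \<le> g i div dexp I i" using lohi i unfolding hi_def by auto
      then show "lo i * dexp I i \<le> g i" using dpos i by (simp add: less_eq_div_iff_mult_less_eq)
    qed
    have L: "(\<Sum>i<n. lo i) \<le> l - 1"
    proof (rule ccontr)
      assume "\<not> ?thesis"
      then have "l \<le> (\<Sum>i<n. lo i)" by linarith
      then obtain c where c: "\<forall>i\<ge>n. c i = 0" "\<forall>i<n. 0 \<le> c i \<and> c i \<le> lo i" "(\<Sum>i<n. c i) = l"
        using sum_choose[of n "\<lambda>_. 0" lo l] by auto
      define w where "w = (\<lambda>i. if i < n then c i * dexp I i else 0)"
      have wI: "w \<in> ideal_pow n I l" unfolding w_def using vec_in_pow[OF mp c(3)] .
      have "w \<le> g" unfolding le_fun_def w_def
      proof (intro allI)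
        fix i show "(if i < n then c i * dexp I i else 0) \<le> g i"
        proof (cases "i < n")
          case True
          then have "c i * dexp I i \<le> lo i * dexp I i" using c(2) by (intro mult_le_mono1) auto
          moreover have "lo i * dexp I i \<le> g i" using True lod by blast
          ultimately have "c i * dexp I i \<le> g i" by (rule order_trans)
          then show ?thesis using True by simp
        qed auto
      qed
      then have wg: "w = g" using gmin wI by blast
      obtain j where j: "j < n" "c j > 0"
      proof -
        have "\<not> (\<forall>i<n. c i = 0)"
        proof
          assume "\<forall>i<n. c i = 0"
          then have "(\<Sum>i<n. c i) = 0" by simp
          then show False using c(3) l1 by simp
        qed
        then show ?thesis using that by auto
      qed
      have "1 \<le> lo j" using c(2) j by fastforce
      then have "lo j * dexp I j < g j" using ceil_facts(2)[of "dexp I j" "g j"] dpos j unfolding lo_def by auto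
      moreover have "c j * dexp I j \<le> lo j * dexp I j" using c(2) j by (intro mult_le_mono1) auto
      moreover have "w j = c j * dexp I j" using j unfolding w_def by simp
      ultimately show False using wg by simp
    qed
    obtain a where a: "\<forall>i\<ge>n. a i = 0" "\<forall>i<n. lo i \<le> a i \<and> a i \<le> hi i" "(\<Sum>i<n. a i) = l - 1"
      using sum_choose[OF lohi L U] by blast
    have ge: "g \<in> expvecs n" using pow_sub[OF mp] gI by auto
    show "\<exists>a\<in>expvecs n. (\<Sum>i<n. a i) = l - 1 \<and> g \<in> box n I a"
    proof (intro bexI conjI)
      show "a \<in> expvecs n" using a(1) by (simp add: expvecs_def)
      show "(\<Sum>i<n. a i) = l - 1" by (rule a(3))
      show "g \<in> box n I a" unfolding box_def mem_Collect_eq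
      proof (intro conjI allI impI ge)
        fix i assume i: "i < n"
        have d: "dexp I i > 0" using dpos i by auto
        have "a i \<le> g i div dexp I i" using a(2) i unfolding hi_def by blast
        then show "a i * dexp I i \<le> g i" using d
          by (simp add: less_eq_div_iff_mult_less_eq)
        have "(g i + dexp I i - 1) div dexp I i \<le> a i + 1" using a(2) i unfolding lo_def by auto
        then have "((g i + dexp I i - 1) div dexp I i) * dexp I i \<le> (a i + 1) * dexp I i"
          by (rule mult_le_mono1)
        then show "g i \<le> (a i + 1) * dexp I i" using ceil_facts(1)[OF d, of "g i"] by linarith
      qed
    qed
  qed
qed

end
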